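(* Let $G=\vec{C}_5^{1,2}$ and let $\mathbb K$ be a field of characteristic $0$. Then for every $n\ge 1$, $\dim_{\mathbb K}\Omega_n(G;\mathbb K)=10$, and a basis of $\Omega_n(G;\mathbb K)$ is given by the ten elements $\{\alpha_a^{(n)},\beta_a^{(n)}\}_{a\in\mathbb Z_5}$, where \[ \alpha_a^{(n)}=e_{a,(a+1),(a+2),\ldots,(a+n)},\qquad \beta_a^{(n)}=\sum_{j=1}^n(-1)^{n-j}\,e_{a,a+1,\ldots,a+j-1,a+j+1,a+j+2,\ldots,a+n+1}, \] all vertex labels being read modulo $5$.
   Context: GLMY path complex. Let $\mathbb K$ be a field of characteristic $0$ and $V$ a finite set. An elementary $n$-path is a sequence $(v_0,\dots,v_n)$ of vertices, written $e_{v_0v_1\cdots v_n}$; $\Lambda_n(V)$ is the $\mathbb K$-span of elementary $n$-paths, with boundary $\partial e_{v_0\cdots v_n}=\sum_{j=0}^n(-1)^j e_{v_0\cdots\widehat{v_j}\cdots v_n}$. The regular path space $R_n(V)$ is the quotient of $\Lambda_n(V)$ by the span of elementary paths with $v_{k-1}=v_k$ for some $k$ (such paths are identified with $0$); $\partial$ descends to $R_*$. For a finite digraph $G=(V,E)$ without loops, $A_n(G)\subset R_n(V)$ is the span of elementary paths $e_{v_0\cdots v_n}$ with $(v_k\to v_{k+1})\in E$ for all $k$ (allowed paths). Set $\Omega_0=A_0$, $\Omega_1=A_1$, and $\Omega_n(G)=\{u\in A_n(G):\partial u\in A_{n-1}(G)\}$ for $n\ge 2$. Then $(\Omega_*(G),\partial)$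 is a chain complex (the path complex) and its homology $H_n^{\mathrm{path}}(G;\mathbb K)$ is the path homology. Circulant digraph: for $n\ge 3$ and $S\subset\mathbb Z_n$ with $0\notin S$, $\vec{C}_n^S$ has vertex set $\mathbb Z_n$ and an arrow $a\to a+s$ for every $a\in\mathbb Z_n$, $s\in S$; $\vec C_n^{1,2}$ means $S=\{1,2\}$. *)

theory Defs
  imports Complex_Main "HOL-Library.Function_Algebras"
begin

text \<open>Chains are K-valued coefficient functions on vertex lists (elementary paths).
  A digraph is given by a finite vertex set V and an arrow set E.\<close>

definition fscale :: "'k::field \<Rightarrow> ('b \<Rightarrow> 'k) \<Rightarrow> ('b \<Rightarrow> 'k)" where
  "fscale c f = (\<lambda>x. c * f x)"

definition regular_path :: "'v list \<Rightarrow> bool" where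
  "regular_path xs \<longleftrightarrow> (\<forall>i. Suc i < length xs \<longrightarrow> xs ! i \<noteq> xs ! Suc i)"

definition allowed_path :: "('v \<times> 'v) set \<Rightarrow> 'v list \<Rightarrow> bool" where
  "allowed_path E xs \<longleftrightarrow> (\<forall>i. Suc i < length xs \<longrightarrow> (xs ! i, xs ! Suc i) \<in> E)"

definition elem_path :: "'v list \<Rightarrow> ('v list \<Rightarrow> 'k::field)" where
  "elem_path xs = (\<lambda>ys. if regular_path xs \<and> ys = xs then 1 else 0)"

definition elem_paths :: "'v set \<Rightarrow> nat \<Rightarrow> 'v list set" where
  "elem_paths V n = {xs. length xs = Suc n \<and> set xs \<subseteq> V}"

definition R_space :: "'v set \<Rightarrow> nat \<Rightarrow> ('v list \<Rightarrow> 'k::field) set" where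
  "R_space V n = {u. \<forall>xs. u xs \<noteq> 0 \<longrightarrow> xs \<in> elem_paths V n \<and> regular_path xs}"

definition del_at :: "nat \<Rightarrow> 'v list \<Rightarrow> 'v list" where
  "del_at j xs = take j xs @ drop (Suc j) xs"

definition bd :: "'v set \<Rightarrow> nat \<Rightarrow> ('v list \<Rightarrow> 'k::field) \<Rightarrow> ('v list \<Rightarrow> 'k)" where
  "bd V n u = (\<lambda>ys. \<Sum>xs\<in>elem_paths V n. u xs *
      (\<Sum>j\<le>n. if del_at j xs = ys \<and> regular_path ys then (-1) ^ j else 0))"

definition A_space :: "'v set \<Rightarrow> ('v \<times> 'v) set \<Rightarrow> nat \<Rightarrow> ('v list \<Rightarrow> 'k::field) set" where
  "A_space V E n = {u \<in> R_space V n. \<forall>xs. u xs \<noteq> 0 \<longrightarrow> allowed_path E xs}"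

definition Omega :: "'v set \<Rightarrow> ('v \<times> 'v) set \<Rightarrow> nat \<Rightarrow> ('v list \<Rightarrow> 'k::field) set" where
  "Omega V E n = (if n \<le> 1 then A_space V E n
     else {u \<in> A_space V E n. bd V n u \<in> A_space V E (n - 1)})"

definition circ_V :: "nat \<Rightarrow> nat set" where
  "circ_V m = {0..<m}"

definition circ_E :: "nat \<Rightarrow> nat set \<Rightarrow> (nat \<times> nat) set" where
  "circ_E m S = {(a, (a + s) mod m) | a s. a < m \<and> s \<in> S}"

definition alpha_path :: "nat \<Rightarrow> nat \<Rightarrow> (nat list \<Rightarrow> 'k::field)" where
  "alpha_path a n = elem_path (map (\<lambda>i. (a + i) mod 5) [0..<Suc n])"

definition beta_path :: "nat \<Rightarrow> nat \<Rightarrow> (nat list \<Rightarrow> 'k::field)" where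
  "beta_path a n = (\<Sum>j\<in>{1..n}. fscale ((-1) ^ (n - j))
      (elem_path (map (\<lambda>i. (a + i) mod 5) ([0..<j] @ [Suc j..<n + 2]))))"

end

theory Submission
  imports Defs
begin

lemma sum_fun_apply: "(\<Sum>i\<in>A. f i) x = (\<Sum>i\<in>A. f i x)"
  by (induct A rule: infinite_finite_induct) auto

lemma vs_fscale: "vector_space (fscale :: 'k::field \<Rightarrow> ('b \<Rightarrow> 'k) \<Rightarrow> _)"
  by unfold_locales (auto simp: fscale_def fun_eq_iff algebra_simps)

definition ins :: "nat \<Rightarrow> 'v \<Rightarrow> 'v list \<Rightarrow> 'v list" where
  "ins k v w = take k w @ v # drop k w"

lemma length_ins: "k \<le> length w \<Longrightarrow> length (ins k v w) = Suc (length w)"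
  by (simp add: ins_def)

lemma nth_ins: "k \<le> length w \<Longrightarrow> ins k v w ! i = (if i < k then w ! i else if i = k then v else w ! (i - 1))"
  by (cases "i < k"; cases "i = k") (auto simp: ins_def nth_append min_def nth_Cons')

lemma length_del_at: "k < length xs \<Longrightarrow> length (del_at k xs) = length xs - 1"
  by (simp add: del_at_def)

lemma nth_del_at: "k < length xs \<Longrightarrow> i < length xs - 1 \<Longrightarrow> del_at k xs ! i = (if i < k then xs ! i else xs ! Suc i)"
  by (auto simp: del_at_def nth_append min_def)

lemma del_at_ins: "k \<le> length w \<Longrightarrow> del_at k (ins k v w) = w"
  by (simp add: del_at_def ins_def)

lemma ins_del_at: "k < length xs \<Longrightarrow> ins k v (del_at k xs) = xs[k := v]"
  by (simp add: del_at_def ins_def upd_conv_take_nth_drop min_def)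

lemma ins_del_at_nth: "k < length xs \<Longrightarrow> ins k (xs ! k) (del_at k xs) = xs"
  by (simp add: ins_del_at)

lemma set_del_at: "set (del_at k xs) \<subseteq> set xs"
  unfolding del_at_def using set_take_subset set_drop_subset by fastforce

lemma finite_EP: "finite V \<Longrightarrow> finite (elem_paths V n)"
  unfolding elem_paths_def by (rule finite_subset[OF _ finite_lists_length_eq[of V "Suc n"]]) auto

lemma reindex_ins:
  assumes "finite V" "length w = n" "set w \<subseteq> V" "k \<le> n"
  shows "(\<Sum>xs\<in>elem_paths V n. if del_at k xs = w then g xs else 0) = (\<Sum>v\<in>V. g (ins k v w))"
proof -
  have "(\<Sum>xs\<in>elem_paths V n. if del_at k xs = w then g xs else 0)
      = sum g {xs\<in>elem_paths V n. del_at k xs = w}"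
    by (rule sum.inter_filter[symmetric]) (rule finite_EP[OF assms(1)])
  also have "{xs\<in>elem_paths V n. del_at k xs = w} = (\<lambda>v. ins k v w) ` V"
  proof (rule set_eqI, rule iffI)
    fix xs assume xs: "xs \<in> {xs\<in>elem_paths V n. del_at k xs = w}"
    then have l: "length xs = Suc n" and s: "set xs \<subseteq> V" and d: "del_at k xs = w"
      by (auto simp: elem_paths_def)
    have "k < length xs" using l assms by simp
    then have "xs = ins k (xs ! k) w" using ins_del_at_nth d by metis
    moreover have "xs ! k \<in> V" using s \<open>k < length xs\<close> nth_mem by blast
    ultimately show "xs \<in> (\<lambda>v. ins k v w) ` V" by blast
  next
    fix xs assume "xs \<in> (\<lambda>v. ins k v w) ` V"
    then obtain v where v: "v \<in> V" "xs = ins k v w" by blast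
    have "set xs \<subseteq> V" using v assms unfolding ins_def
      using set_take_subset set_drop_subset by fastforce
    then show "xs \<in> {xs\<in>elem_paths V n. del_at k xs = w}"
      using v assms by (simp add: elem_paths_def length_ins del_at_ins)
  qed
  also have "sum g ((\<lambda>v. ins k v w) ` V) = (\<Sum>v\<in>V. g (ins k v w))"
  proof (rule sum.reindex[unfolded comp_def])
    show "inj_on (\<lambda>v. ins k v w) V"
    proof
      fix v v' assume "ins k v w = ins k v' w"
      then have "ins k v w ! k = ins k v' w ! k" by simp
      then show "v = v'" using assms by (simp add: nth_ins)
    qed
  qed
  finally show ?thesis .
qed

lemma bd_bad:
  fixes u :: "'v list \<Rightarrow> 'k::field"
  assumes V: "finite V" and u: "u \<in> A_space V E n" and w: "length w = n" "set w \<subseteq> V" "regular_path w"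
    and i: "Suc i < n" "(w ! i, w ! Suc i) \<notin> E"
  shows "bd V n u w = (-1) ^ Suc i * (\<Sum>v\<in>V. u (ins (Suc i) v w))"
proof -
  have step: "u xs * (\<Sum>j\<le>n. if del_at j xs = w \<and> regular_path w then (-1) ^ j else 0)
      = (if del_at (Suc i) xs = w then (-1) ^ Suc i * u xs else 0)" if xs: "xs \<in> elem_paths V n" for xs
  proof (cases "u xs = 0")
    case True then show ?thesis by simp
  next
    case False
    then have al: "allowed_path E xs" using u by (auto simp: A_space_def)
    have l: "length xs = Suc n" using xs by (simp add: elem_paths_def)
    have ne: "del_at j xs \<noteq> w" if "j \<le> n" "j \<noteq> Suc i" for j
    proof
      assume d: "del_at j xs = w"
      have jl: "j < length xs" using that l by simp
      show False
      proof (cases "j \<le> i")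
        case True
        have "w ! i = xs ! Suc i" "w ! Suc i = xs ! Suc (Suc i)"
          using nth_del_at[OF jl, of i] nth_del_at[OF jl, of "Suc i"] True d i l by auto
        moreover have "(xs ! Suc i, xs ! Suc (Suc i)) \<in> E"
          using al l i unfolding allowed_path_def by auto
        ultimately show False using i by simp
      next
        case False
        then have "Suc i < j" using that by simp
        then have "w ! i = xs ! i" "w ! Suc i = xs ! Suc i"
          using nth_del_at[OF jl, of i] nth_del_at[OF jl, of "Suc i"] d i l by auto
        moreover have "(xs ! i, xs ! Suc i) \<in> E"
          using al l i unfolding allowed_path_def by auto
        ultimately show False using i by simp
      qed
    qed
    have "(\<Sum>j\<le>n. if del_at j xs = w \<and> regular_path w then (-1) ^ j else 0)
        = (\<Sum>j\<le>n. if j = Suc i then (if del_at (Suc i) xs = w then (-1) ^ Suc i else 0) else (0::'k))"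
      by (rule sum.cong) (use ne w in auto)
    also have "\<dots> = (if del_at (Suc i) xs = w then (-1) ^ Suc i else 0)"
      using i by (simp add: sum.delta)
    finally show ?thesis by simp
  qed
  have "bd V n u w = (\<Sum>xs\<in>elem_paths V n. if del_at (Suc i) xs = w then (-1) ^ Suc i * u xs else 0)"
    unfolding bd_def by (rule sum.cong) (use step in auto)
  also have "\<dots> = (\<Sum>v\<in>V. (-1) ^ Suc i * u (ins (Suc i) v w))"
    by (rule reindex_ins) (use V w i in auto)
  finally show ?thesis by (simp add: sum_distrib_left)
qed

lemma Omega_dest:
  fixes u :: "'v list \<Rightarrow> 'k::field"
  assumes V: "finite V" and u: "u \<in> Omega V E n" and w: "length w = n" "set w \<subseteq> V" "regular_path w"
    and i: "Suc i < n" "(w ! i, w ! Suc i) \<notin> E"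
  shows "(\<Sum>v\<in>V. u (ins (Suc i) v w)) = 0"
proof -
  have uA: "u \<in> A_space V E n" and bA: "bd V n u \<in> A_space V E (n - 1)"
    using u i by (auto simp: Omega_def split: if_splits)
  have "\<not> allowed_path E w" using i w unfolding allowed_path_def by auto
  then have "bd V n u w = 0" using bA by (auto simp: A_space_def)
  then show ?thesis using bd_bad[OF V uA w i] by simp
qed

lemma Omega_intro:
  fixes u :: "'v list \<Rightarrow> 'k::field"
  assumes V: "finite V" and n: "2 \<le> n" and uA: "u \<in> A_space V E n"
    and H: "\<And>w i. length w = n \<Longrightarrow> set w \<subseteq> V \<Longrightarrow> regular_path w \<Longrightarrow> Suc i < n
       \<Longrightarrow> (w ! i, w ! Suc i) \<notin> E \<Longrightarrow> (\<Sum>v\<in>V. u (ins (Suc i) v w)) = 0"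
  shows "u \<in> Omega V E n"
proof -
  have "bd V n u \<in> A_space V E (n - 1)"
    unfolding A_space_def R_space_def
  proof (intro CollectI conjI allI impI)
    fix ys assume nz: "bd V n u ys \<noteq> 0"
    have "\<exists>xs\<in>elem_paths V n. \<exists>j\<le>n. del_at j xs = ys \<and> regular_path ys"
    proof (rule ccontr)
      assume "\<not> ?thesis"
      then have "bd V n u ys = 0" unfolding bd_def by (auto intro!: sum.neutral)
      with nz show False by simp
    qed
    then obtain xs j where xs: "xs \<in> elem_paths V n" and j: "j \<le> n" "del_at j xs = ys" and r: "regular_path ys"
      by blast
    have "length ys = n" using xs j by (auto simp: elem_paths_def del_at_def)
    moreover have "set ys \<subseteq> V" using xs j set_del_at by (fastforce simp: elem_paths_def)
    ultimately show ys: "ys \<in> elem_paths V (n - 1)" using n by (simp add: elem_paths_def)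
    show "regular_path ys" by (rule r)
    show "allowed_path E ys"
    proof (rule ccontr)
      assume "\<not> allowed_path E ys"
      then obtain i where i: "Suc i < length ys" "(ys ! i, ys ! Suc i) \<notin> E"
        unfolding allowed_path_def by auto
      have "bd V n u ys = (-1) ^ Suc i * (\<Sum>v\<in>V. u (ins (Suc i) v ys))"
        using bd_bad[OF V uA _ _ r, of i] i \<open>length ys = n\<close> \<open>set ys \<subseteq> V\<close> by auto
      also have "\<dots> = 0" using H[OF \<open>length ys = n\<close> \<open>set ys \<subseteq> V\<close> r, of i] i \<open>length ys = n\<close> by simp
      finally show False using nz by simp
    qed
  qed
  then show ?thesis using uA n by (simp add: Omega_def)
qed

lemma bd_add: "bd V n (u + v) = bd V n u + bd V n v"
  unfolding bd_def by (auto simp: fun_eq_iff sum.distrib distrib_right)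

lemma bd_scale: "bd V n (fscale c u) = fscale c (bd V n u)"
  unfolding bd_def fscale_def by (auto simp: fun_eq_iff sum_distrib_left mult.assoc)

lemma bd_zero: "bd V n 0 = 0"
  unfolding bd_def by (auto simp: fun_eq_iff)

lemma A_sub: "0 \<in> A_space V E n" "u \<in> A_space V E n \<Longrightarrow> v \<in> A_space V E n \<Longrightarrow> u + v \<in> A_space V E n"
  "u \<in> A_space V E n \<Longrightarrow> fscale c u \<in> A_space V E n"
  by (auto simp: A_space_def R_space_def fscale_def) (metis add.right_neutral)+

lemma Omega_subspace: "module.subspace fscale (Omega V E n)"
proof -
  interpret vector_space fscale by (rule vs_fscale)
  show ?thesis
    by (rule subspaceI) (auto simp: Omega_def bd_add bd_scale bd_zero A_sub split: if_splits)
qed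

abbreviation "V5 \<equiv> circ_V 5"
abbreviation "E5 \<equiv> circ_E 5 {1, 2}"

lemma E5_iff: "(x, y) \<in> E5 \<longleftrightarrow> x < 5 \<and> (y = (x + 1) mod 5 \<or> y = (x + 2) mod 5)"
  unfolding circ_E_def apply auto
  apply (rule exI[where x=1]; simp)
  apply (rule exI[where x=2]; simp)
  done

lemma five_cases: "(b::nat) < 5 \<Longrightarrow> b = 0 \<or> b = 1 \<or> b = 2 \<or> b = 3 \<or> b = 4" by auto
lemma ar_reg: "(x::nat) < 5 \<Longrightarrow> (x + 1) mod 5 \<noteq> x \<and> (x + 2) mod 5 \<noteq> x" by (drule five_cases) auto
lemma ar4: "(b::nat) < 5 \<Longrightarrow> v = (b+1) mod 5 \<or> v = (b+2) mod 5 \<Longrightarrow> (b+4) mod 5 = (v+1) mod 5 \<or> (b+4) mod 5 = (v+2) mod 5 \<Longrightarrow> v = (b+2) mod 5"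
  by (drule five_cases) auto
lemma ar_c4: "(x::nat) = (b+2) mod 5 \<Longrightarrow> z = (x+2) mod 5 \<Longrightarrow> z = (b+4) mod 5" 
proof -
  assume a: "x = (b+2) mod 5" "z = (x+2) mod 5"
  have "z = ((b+2) mod 5 + 2) mod 5" using a by simp
  also have "\<dots> = (b + 2 + 2) mod 5" by (rule mod_add_left_eq)
  also have "b + 2 + 2 = b + 4" by simp
  finally show ?thesis .
qed
lemma ar_ne4: "(b::nat) < 5 \<Longrightarrow> \<not>((b+4) mod 5 = (b+1) mod 5 \<or> (b+4) mod 5 = (b+2) mod 5) \<and> b \<noteq> (b+4) mod 5" by (drule five_cases) auto
lemma ar_ne3: "(b::nat) < 5 \<Longrightarrow> \<not>((b+3) mod 5 = (b+1) mod 5 \<or> (b+3) mod 5 = (b+2) mod 5) \<and> b \<noteq> (b+3) mod 5" by (drule five_cases) auto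
lemma ar_ne21: "((b::nat) + 2) mod 5 \<noteq> (b + 1) mod 5"
proof -
  have "(b+2) mod 5 = (b mod 5 + 2) mod 5" "(b+1) mod 5 = (b mod 5 + 1) mod 5" by (rule mod_add_left_eq[symmetric])+
  moreover have "b mod 5 < 5" by simp
  moreover have "\<And>c::nat. c < 5 \<Longrightarrow> (c+2) mod 5 \<noteq> (c+1) mod 5" by (drule five_cases) auto
  ultimately show ?thesis by metis
qed

lemma V5_eq: "V5 = {0..<5}" by (simp add: circ_V_def)

lemma allowed5_regular: "allowed_path E5 xs \<Longrightarrow> regular_path xs"
  unfolding allowed_path_def regular_path_def E5_iff using ar_reg by metis

lemma EP5: "xs \<in> elem_paths V5 n \<longleftrightarrow> length xs = Suc n \<and> (\<forall>i<Suc n. xs ! i < 5)"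
  unfolding elem_paths_def circ_V_def by (auto simp: in_set_conv_nth subset_iff; blast)

lemma spec_sum:
  fixes u :: "nat list \<Rightarrow> 'k::field"
  assumes u: "u \<in> Omega V5 E5 n" and xs: "xs \<in> elem_paths V5 n" "allowed_path E5 xs"
    and k: "0 < k" "k < n" and bad: "(xs ! (k - 1), xs ! Suc k) \<notin> E5" "xs ! (k - 1) \<noteq> xs ! Suc k"
  shows "(\<Sum>v\<in>{0..<5}. u (xs[k := v])) = 0"
proof -
  define w where "w = del_at k xs"
  have l: "length xs = Suc n" using xs by (simp add: elem_paths_def)
  have kl: "k < length xs" using k l by simp
  have lw: "length w = n" using kl l by (simp add: w_def length_del_at)
  have sw: "set w \<subseteq> V5" using xs set_del_at unfolding w_def elem_paths_def by fastforce
  have rx: "regular_path xs" by (rule allowed5_regular[OF xs(2)])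
  have rx': "xs ! j \<noteq> xs ! Suc j" if "Suc j < Suc n" for j
    using rx that l unfolding regular_path_def by simp
  have nw: "w ! i = (if i < k then xs ! i else xs ! Suc i)" if "i < n" for i
    using nth_del_at[OF kl, of i] that l by (simp add: w_def)
  have rw: "regular_path w"
    unfolding regular_path_def
  proof (intro allI impI)
    fix i assume i: "Suc i < length w"
    show "w ! i \<noteq> w ! Suc i"
    proof (cases "Suc i < k")
      case True then show ?thesis using nw[of i] nw[of "Suc i"] i lw rx'[of i] by simp
    next
      case False
      show ?thesis
      proof (cases "Suc i = k")
        case True then show ?thesis using nw[of i] nw[of "Suc i"] i lw bad by auto
      next
        case False
        then have "k \<le> i" using \<open>\<not> Suc i < k\<close> by simp
        then show ?thesis using nw[of i] nw[of "Suc i"] i lw rx'[of "Suc i"] by simp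
      qed
    qed
  qed
  have "(\<Sum>v\<in>V5. u (ins (Suc (k - 1)) v w)) = 0"
    by (rule Omega_dest[OF _ u lw sw rw]) (use k bad nw in \<open>auto simp: circ_V_def\<close>)
  moreover have "ins (Suc (k - 1)) v w = xs[k := v]" for v
    using k kl by (simp add: w_def ins_del_at)
  ultimately show ?thesis by (simp add: V5_eq)
qed

lemma only_good:
  fixes u :: "nat list \<Rightarrow> 'k::field"
  assumes u: "u \<in> A_space V5 E5 n" and xs: "xs \<in> elem_paths V5 n"
    and k: "0 < k" "k < n" and nz: "u (xs[k := v]) \<noteq> 0"
  shows "(xs ! (k - 1), v) \<in> E5 \<and> (v, xs ! Suc k) \<in> E5"
proof -
  have al: "allowed_path E5 (xs[k := v])" using u nz unfolding A_space_def by blast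
  have l: "length xs = Suc n" using xs by (simp add: elem_paths_def)
  have al': "(xs[k := v] ! i, xs[k := v] ! Suc i) \<in> E5" if "Suc i < Suc n" for i
    using al l that unfolding allowed_path_def by simp
  have "(xs[k := v] ! (k - 1), xs[k := v] ! Suc (k - 1)) \<in> E5"
    by (rule al') (use k in simp)
  moreover have "(xs[k := v] ! k, xs[k := v] ! Suc k) \<in> E5"
    by (rule al') (use k in simp)
  moreover have "Suc (k - 1) = k" using k by simp
  ultimately show ?thesis using k l by simp
qed

lemma F1:
  fixes u :: "nat list \<Rightarrow> 'k::field"
  assumes u: "u \<in> Omega V5 E5 n" and xs: "xs \<in> elem_paths V5 n" "allowed_path E5 xs"
    and k: "0 < k" "k < n"
    and s: "xs ! k = (xs ! (k - 1) + 2) mod 5" "xs ! Suc k = (xs ! k + 2) mod 5"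
  shows "u xs = 0"
proof -
  have uA: "u \<in> A_space V5 E5 n" using u by (auto simp: Omega_def split: if_splits)
  define b where "b = xs ! (k - 1)"
  have b5: "b < 5" using xs k by (auto simp: EP5 b_def)
  have c: "xs ! Suc k = (b + 4) mod 5" using ar_c4[OF s(1)[folded b_def] s(2)] .
  have "(b, (b + 4) mod 5) \<notin> E5" "b \<noteq> (b + 4) mod 5" using ar_ne4[OF b5] unfolding E5_iff by auto
  then have S: "(\<Sum>v\<in>{0..<5}. u (xs[k := v])) = 0"
    using spec_sum[OF u xs k] c b_def by simp
  have z: "u (xs[k := v]) = 0" if "v \<in> {0..<5} - {(b + 2) mod 5}" for v
  proof (rule ccontr)
    assume nz: "u (xs[k := v]) \<noteq> 0"
    have g: "(xs ! (k - 1), v) \<in> E5 \<and> (v, xs ! Suc k) \<in> E5" by (rule only_good[OF uA xs(1) k nz])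
    have "(b, v) \<in> E5 \<and> (v, (b + 4) mod 5) \<in> E5" using g by (simp only: c b_def)
    then have
      "v = (b + 1) mod 5 \<or> v = (b + 2) mod 5" "(b + 4) mod 5 = (v + 1) mod 5 \<or> (b + 4) mod 5 = (v + 2) mod 5"
      unfolding E5_iff by auto
    then show False using that ar4[OF b5] by auto
  qed
  have "(\<Sum>v\<in>{0..<5}. u (xs[k := v])) = u (xs[k := (b + 2) mod 5])"
  proof -
    have "(\<Sum>v\<in>{0..<5}. u (xs[k := v])) = (\<Sum>v\<in>{(b + 2) mod 5}. u (xs[k := v]))"
      by (rule sum.mono_neutral_right) (use z in auto)
    then show ?thesis by simp
  qed
  also have "xs[k := (b + 2) mod 5] = xs" unfolding b_def s(1)[symmetric] by (rule list_update_id)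
  finally show ?thesis using S by simp
qed

lemma F2:
  fixes u :: "nat list \<Rightarrow> 'k::field"
  assumes u: "u \<in> Omega V5 E5 n" and xs: "xs \<in> elem_paths V5 n" "allowed_path E5 xs"
    and k: "0 < k" "k < n"
    and s: "xs ! k = (xs ! (k - 1) + 1) mod 5" "xs ! Suc k = (xs ! (k - 1) + 3) mod 5"
  shows "u xs + u (xs[k := (xs ! (k - 1) + 2) mod 5]) = 0"
proof -
  have uA: "u \<in> A_space V5 E5 n" using u by (auto simp: Omega_def split: if_splits)
  define b where "b = xs ! (k - 1)"
  have b5: "b < 5" using xs k by (auto simp: EP5 b_def)
  have c: "xs ! Suc k = (b + 3) mod 5" using s b_def by simp
  have "(b, (b + 3) mod 5) \<notin> E5" "b \<noteq> (b + 3) mod 5" using ar_ne3[OF b5] unfolding E5_iff by auto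
  then have S: "(\<Sum>v\<in>{0..<5}. u (xs[k := v])) = 0"
    using spec_sum[OF u xs k] c b_def by simp
  have z: "u (xs[k := v]) = 0" if "v \<in> {0..<5} - {(b + 1) mod 5} - {(b + 2) mod 5}" for v
  proof (rule ccontr)
    assume nz: "u (xs[k := v]) \<noteq> 0"
    have g: "(xs ! (k - 1), v) \<in> E5 \<and> (v, xs ! Suc k) \<in> E5" by (rule only_good[OF uA xs(1) k nz])
    have "(b, v) \<in> E5" unfolding b_def using g by blast
    then have
      "v = (b + 1) mod 5 \<or> v = (b + 2) mod 5"
      unfolding E5_iff by auto
    then show False using that by auto
  qed
  have ne: "(b + 2) mod 5 \<noteq> (b + 1) mod 5" by (rule ar_ne21)
  have "(\<Sum>v\<in>{0..<5}. u (xs[k := v])) = u (xs[k := (b + 1) mod 5]) + u (xs[k := (b + 2) mod 5])"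
  proof -
    have "(\<Sum>v\<in>{0..<5}. u (xs[k := v])) = (\<Sum>v\<in>{(b + 1) mod 5, (b + 2) mod 5}. u (xs[k := v]))"
      by (rule sum.mono_neutral_right) (use z in auto)
    also have "\<dots> = u (xs[k := (b + 1) mod 5]) + u (xs[k := (b + 2) mod 5])"
      using ne by (simp add: sum.insert)
    finally show ?thesis .
  qed
  also have "xs[k := (b + 1) mod 5] = xs" unfolding b_def s(1)[symmetric] by (rule list_update_id)
  finally show ?thesis using S b_def by simp
qed


lemma step_mod: "m = m' + d \<Longrightarrow> ((a::nat) + m) mod 5 = ((a + m') mod 5 + d) mod 5"
  by (simp only: mod_add_left_eq add.assoc)

lemma ne_mod1: "((c::nat) + 1) mod 5 \<noteq> c mod 5"
proof -
  have "(c + 1) mod 5 = (c mod 5 + 1) mod 5" by (rule mod_add_left_eq[symmetric])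
  moreover have "c mod 5 < 5" by simp
  ultimately show ?thesis using ar_reg by metis
qed

definition Pl :: "nat \<Rightarrow> nat \<Rightarrow> nat list" where
  "Pl n a = map (\<lambda>i. (a + i) mod 5) [0..<Suc n]"

definition Ql :: "nat \<Rightarrow> nat \<Rightarrow> nat \<Rightarrow> nat list" where
  "Ql n a j = map (\<lambda>i. (a + (if i < j then i else Suc i)) mod 5) [0..<Suc n]"

lemma length_Pl[simp]: "length (Pl n a) = Suc n" by (simp add: Pl_def)
lemma length_Ql[simp]: "length (Ql n a j) = Suc n" by (simp add: Ql_def)
lemma nth_Pl: "i < Suc n \<Longrightarrow> Pl n a ! i = (a + i) mod 5" by (simp add: Pl_def del: upt_Suc)
lemma nth_Ql: "i < Suc n \<Longrightarrow> Ql n a j ! i = (a + (if i < j then i else Suc i)) mod 5"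
  by (simp add: Ql_def del: upt_Suc)

lemma Ql_eq: "j \<le> Suc n \<Longrightarrow> map (\<lambda>i. (a + i) mod 5) ([0..<j] @ [Suc j..<n + 2]) = Ql n a j"
proof -
  assume j: "j \<le> Suc n"
  have "[0..<j] @ [Suc j..<n + 2] = map (\<lambda>i. if i < j then i else Suc i) [0..<Suc n]"
    by (rule nth_equalityI) (use j in \<open>auto simp: nth_append simp del: upt_Suc\<close>)
  then show ?thesis by (simp add: Ql_def del: upt_Suc)
qed

lemma alpha_eq: "alpha_path a n = elem_path (Pl n a)"
  by (simp add: alpha_path_def Pl_def)

lemma beta_eq: "beta_path a n = (\<Sum>j\<in>{1..n}. fscale ((-1) ^ (n - j)) (elem_path (Ql n a j)))"
  unfolding beta_path_def
proof (rule sum.cong[OF refl])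
  fix j assume "j \<in> {1..n}"
  then show "fscale ((-1) ^ (n - j)) (elem_path (map (\<lambda>i. (a + i) mod 5) ([0..<j] @ [Suc j..<n + 2])))
    = fscale ((-1) ^ (n - j)) (elem_path (Ql n a j))" by (subst Ql_eq) auto
qed

lemma allowed_Pl: "a < 5 \<Longrightarrow> allowed_path E5 (Pl n a)"
  unfolding allowed_path_def E5_iff
proof (intro allI impI conjI)
  fix i assume i: "Suc i < length (Pl n a)" and a: "a < 5"
  show "Pl n a ! i < 5" using i by (simp add: nth_Pl)
  have e: "Pl n a ! Suc i = (a + Suc i) mod 5" "Pl n a ! i = (a + i) mod 5" using i by (simp_all add: nth_Pl)
  show "Pl n a ! Suc i = (Pl n a ! i + 1) mod 5 \<or> Pl n a ! Suc i = (Pl n a ! i + 2) mod 5"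
    unfolding e by (rule disjI1, rule step_mod) simp
qed

lemma allowed_Ql: "allowed_path E5 (Ql n a j)"
  unfolding allowed_path_def E5_iff
proof (intro allI impI conjI)
  fix i assume i: "Suc i < length (Ql n a j)"
  show "Ql n a j ! i < 5" using i by (simp add: nth_Ql)
  define f where "f = (\<lambda>i. if i < j then i else Suc i)"
  have e: "Ql n a j ! Suc i = (a + f (Suc i)) mod 5" "Ql n a j ! i = (a + f i) mod 5"
    using i by (simp_all add: nth_Ql f_def)
  show "Ql n a j ! Suc i = (Ql n a j ! i + 1) mod 5 \<or> Ql n a j ! Suc i = (Ql n a j ! i + 2) mod 5"
  proof (cases "Suc i = j")
    case True then show ?thesis unfolding e by (rule_tac disjI2, rule_tac step_mod) (simp add: f_def)
  next
    case False then show ?thesis unfolding e by (rule_tac disjI1, rule_tac step_mod) (simp add: f_def)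
  qed
qed

lemma reg_Pl: "a < 5 \<Longrightarrow> regular_path (Pl n a)" by (rule allowed5_regular[OF allowed_Pl])
lemma reg_Ql: "regular_path (Ql n a j)" by (rule allowed5_regular[OF allowed_Ql])

lemma EP_Pl: "Pl n a \<in> elem_paths V5 n" by (simp add: EP5 nth_Pl)
lemma EP_Ql: "Ql n a j \<in> elem_paths V5 n" by (simp add: EP5 nth_Ql)

lemma Q_two:
  assumes "m < n" "Ql n a j ! Suc m = (Ql n a j ! m + 2) mod 5"
  shows "Suc m = j"
proof (rule ccontr)
  assume ne: "Suc m \<noteq> j"
  define c where "c = a + (if m < j then m else Suc m)"
  have 1: "Ql n a j ! Suc m = (c + 1) mod 5" using assms ne by (auto simp: nth_Ql c_def)
  have 2: "Ql n a j ! m = c mod 5" using assms by (simp add: nth_Ql c_def)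
  have "(c + 1) mod 5 = (c mod 5 + 2) mod 5" using 1 2 assms(2) by metis
  also have "\<dots> = (c + 2) mod 5" by (rule mod_add_left_eq)
  finally show False using ar_ne21[of c] by metis
qed

lemma Q_inj: "j \<le> n \<Longrightarrow> j' \<le> n \<Longrightarrow> Ql n a j = Ql n a j' \<Longrightarrow> j = j'"
proof (rule ccontr)
  assume j: "j \<le> n" "j' \<le> n" and e: "Ql n a j = Ql n a j'" and ne: "j \<noteq> j'"
  have "Ql n a (min j j') ! (min j j') = Ql n a (max j j') ! (min j j')"
    using e by (cases "j \<le> j'") (auto simp: min_def max_def)
  then have "(a + min j j' + 1) mod 5 = (a + min j j') mod 5"
    using j ne by (auto simp: nth_Ql min_def max_def split: if_splits)
  then show False using ne_mod1 by metis
qed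

lemma head_Ql: "1 \<le> j \<Longrightarrow> a < 5 \<Longrightarrow> Ql n a j ! 0 = a" by (simp add: nth_Ql)
lemma head_Pl: "a < 5 \<Longrightarrow> Pl n a ! 0 = a" by (simp add: nth_Pl)

lemma P_ne_Q: "a < 5 \<Longrightarrow> a' < 5 \<Longrightarrow> 1 \<le> j \<Longrightarrow> j \<le> n \<Longrightarrow> Pl n a' \<noteq> Ql n a j"
proof
  assume a: "a < 5" "a' < 5" "1 \<le> j" "j \<le> n" and e: "Pl n a' = Ql n a j"
  then have "a' = a" using head_Pl head_Ql by metis
  have "Pl n a' ! j = Ql n a j ! j" using e by simp
  then have "(a + j + 1) mod 5 = (a + j) mod 5" using a \<open>a' = a\<close> by (simp add: nth_Pl nth_Ql)
  then show False using ne_mod1 by metis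
qed

lemma swap_Q1: "Suc j \<le> n \<Longrightarrow> (Ql n a (Suc j))[j := (a + Suc j) mod 5] = Ql n a j"
  by (rule nth_equalityI) (auto simp: nth_Ql nth_list_update)

lemma swap_Q2: "Suc j \<le> n \<Longrightarrow> (Ql n a j)[j := (a + j) mod 5] = Ql n a (Suc j)"
  by (rule nth_equalityI) (auto simp: nth_Ql nth_list_update)

lemma elem_path_reg: "regular_path xs \<Longrightarrow> elem_path xs ys = (if ys = xs then 1 else 0)"
  by (simp add: elem_path_def)

lemma alpha_val: "a < 5 \<Longrightarrow> alpha_path a n xs = (if xs = Pl n a then 1 else 0)"
  by (simp add: alpha_eq elem_path_reg reg_Pl)

lemma beta_val0: "(\<And>j. j \<in> {1..n} \<Longrightarrow> xs \<noteq> Ql n a j) \<Longrightarrow> beta_path a n xs = 0"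
  by (simp add: beta_eq sum_fun_apply fscale_def elem_path_def)

lemma beta_val: "j \<in> {1..n} \<Longrightarrow> beta_path a n (Ql n a j) = (-1) ^ (n - j)"
proof -
  assume j: "j \<in> {1..n}"
  have "beta_path a n (Ql n a j) = (\<Sum>j'\<in>{1..n}. (-1) ^ (n - j') * (if Ql n a j = Ql n a j' then 1 else 0))"
    by (simp add: beta_eq sum_fun_apply fscale_def elem_path_reg reg_Ql)
  also have "\<dots> = (\<Sum>j'\<in>{1..n}. if j' = j then (-1) ^ (n - j') else 0)"
    by (rule sum.cong) (use j Q_inj in auto)
  finally show ?thesis using j by simp
qed


lemma mod_12_3: "(((x::nat) + 1) mod 5 + 2) mod 5 = (x + 3) mod 5"
proof -
  have "((x + 1) mod 5 + 2) mod 5 = (x + 1 + 2) mod 5" by (rule mod_add_left_eq)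
  also have "x + 1 + 2 = x + 3" by simp
  finally show ?thesis .
qed

lemma mod_21_3: "((x::nat) + 3) mod 5 = ((x + 2) mod 5 + 1) mod 5"
proof -
  have "((x + 2) mod 5 + 1) mod 5 = (x + 2 + 1) mod 5" by (rule mod_add_left_eq)
  also have "x + 2 + 1 = x + 3" by simp
  finally show ?thesis by simp
qed

lemma allowed_nth: "allowed_path E5 xs \<Longrightarrow> Suc i < length xs \<Longrightarrow>
    xs ! i < 5 \<and> (xs ! Suc i = (xs ! i + 1) mod 5 \<or> xs ! Suc i = (xs ! i + 2) mod 5)"
  unfolding allowed_path_def E5_iff by blast

lemma no_two_twos:
  fixes u :: "nat list \<Rightarrow> 'k::field"
  assumes u: "u \<in> Omega V5 E5 n"
  shows "xs \<in> elem_paths V5 n \<Longrightarrow> allowed_path E5 xs \<Longrightarrow> xs ! Suc p = (xs ! p + 2) mod 5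
    \<Longrightarrow> xs ! Suc (p + d + 1) = (xs ! (p + d + 1) + 2) mod 5 \<Longrightarrow> p + d + 1 < n \<Longrightarrow> u xs = 0"
proof (induction d arbitrary: xs)
  case 0
  have a: "xs ! Suc p = (xs ! (Suc p - 1) + 2) mod 5" using "0.prems"(3) by simp
  have b: "xs ! Suc (Suc p) = (xs ! Suc p + 2) mod 5" using "0.prems"(4) by simp
  show ?case by (rule F1[OF u "0.prems"(1,2) _ _ a b]) (use "0.prems"(5) in auto)
next
  case (Suc d)
  define m where "m = p + d + 1"
  have l: "length xs = Suc n" using Suc.prems(1) by (simp add: elem_paths_def)
  have mn: "Suc m < n" using Suc.prems(5) by (simp add: m_def)
  have q: "xs ! Suc (Suc m) = (xs ! Suc m + 2) mod 5" using Suc.prems(4) by (simp add: m_def)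
  have st: "xs ! m < 5 \<and> (xs ! Suc m = (xs ! m + 1) mod 5 \<or> xs ! Suc m = (xs ! m + 2) mod 5)"
    by (rule allowed_nth[OF Suc.prems(2)]) (use l mn in simp)
  show ?case
  proof (cases "xs ! Suc m = (xs ! m + 2) mod 5")
    case True
    show ?thesis by (rule Suc.IH[OF Suc.prems(1,2,3)]) (use True mn in \<open>simp_all add: m_def\<close>)
  next
    case False
    then have one: "xs ! Suc m = (xs ! m + 1) mod 5" using st by blast
    have q3: "xs ! Suc (Suc m) = (xs ! m + 3) mod 5" using q one mod_12_3 by metis
    define xs' where "xs' = xs[Suc m := (xs ! m + 2) mod 5]"
    have F: "u xs + u (xs[Suc m := (xs ! (Suc m - 1) + 2) mod 5]) = 0"
      by (rule F2[OF u Suc.prems(1,2)]) (use mn one q3 in simp_all)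
    then have F': "u xs + u xs' = 0" by (simp add: xs'_def)
    have l': "length xs' = Suc n" using l by (simp add: xs'_def)
    have EP': "xs' \<in> elem_paths V5 n"
      unfolding EP5
    proof (intro conjI allI impI)
      show "length xs' = Suc n" by (rule l')
      fix i assume "i < Suc n"
      then show "xs' ! i < 5" using Suc.prems(1) l mn by (auto simp: xs'_def nth_list_update EP5)
    qed
    have al': "allowed_path E5 xs'"
      unfolding allowed_path_def
    proof (intro allI impI)
      fix i assume i: "Suc i < length xs'"
      show "(xs' ! i, xs' ! Suc i) \<in> E5"
      proof (cases "i = m")
        case True
        have "xs' ! i = xs ! m" "xs' ! Suc i = (xs ! m + 2) mod 5"
          using True l mn by (simp_all add: xs'_def)
        then show ?thesis unfolding E5_iff using st by simp
      next
        case False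
        show ?thesis
        proof (cases "i = Suc m")
          case True
          have "xs' ! i = (xs ! m + 2) mod 5" "xs' ! Suc i = xs ! Suc (Suc m)"
            using True l mn by (simp_all add: xs'_def)
          then show ?thesis unfolding E5_iff using q3 mod_21_3 by auto
        next
          case False
          have "xs' ! i = xs ! i" "xs' ! Suc i = xs ! Suc i"
            using False \<open>i \<noteq> m\<close> by (simp_all add: xs'_def)
          then show ?thesis using Suc.prems(2) i l l' unfolding allowed_path_def by simp
        qed
      qed
    qed
    have "p < m" by (simp add: m_def)
    have t1: "xs' ! Suc p = (xs' ! p + 2) mod 5"
      using Suc.prems(3) \<open>p < m\<close> by (simp add: xs'_def)
    have t2': "xs' ! Suc m = (xs' ! m + 2) mod 5"
      using l mn by (simp add: xs'_def)
    have t2: "xs' ! Suc (p + d + 1) = (xs' ! (p + d + 1) + 2) mod 5"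
      using t2' unfolding m_def .
    have "u xs' = 0" by (rule Suc.IH[OF EP' al' t1 t2]) (use mn in \<open>simp add: m_def\<close>)
    then show ?thesis using F' by simp
  qed
qed


lemma classify:
  fixes u :: "nat list \<Rightarrow> 'k::field"
  assumes u: "u \<in> Omega V5 E5 n" and xs: "xs \<in> elem_paths V5 n" and nz: "u xs \<noteq> 0"
  shows "(\<exists>a<5. xs = Pl n a) \<or> (\<exists>a<5. \<exists>j\<in>{1..n}. xs = Ql n a j)"
proof -
  have al: "allowed_path E5 xs" using u nz by (auto simp: Omega_def A_space_def split: if_splits)
  have l: "length xs = Suc n" using xs by (simp add: elem_paths_def)
  define a where "a = xs ! 0"
  have a5: "a < 5" using xs by (simp add: EP5 a_def)
  have st: "xs ! Suc m = (xs ! m + 1) mod 5 \<or> xs ! Suc m = (xs ! m + 2) mod 5" if "m < n" for m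
    using allowed_nth[OF al, of m] that l by simp
  have uniq: "m = m'" if "m < n" "m' < n" "xs ! Suc m = (xs ! m + 2) mod 5"
      "xs ! Suc m' = (xs ! m' + 2) mod 5" for m m'
  proof (rule ccontr)
    assume "m \<noteq> m'"
    then consider "m < m'" | "m' < m" by linarith
    then show False
    proof cases
      case 1
      have "u xs = 0"
        by (rule no_two_twos[OF u xs al that(3), of "m' - m - 1"]) (use 1 that in simp_all)
      with nz show False by simp
    next
      case 2
      have "u xs = 0"
        by (rule no_two_twos[OF u xs al that(4), of "m - m' - 1"]) (use 2 that in simp_all)
      with nz show False by simp
    qed
  qed
  show ?thesis
  proof (cases "\<exists>p<n. xs ! Suc p = (xs ! p + 2) mod 5")
    case True
    then obtain p where p: "p < n" "xs ! Suc p = (xs ! p + 2) mod 5" by blast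
    define f where "f = (\<lambda>i. if i < Suc p then i else Suc i)"
    have val: "xs ! i = (a + f i) mod 5" if "i \<le> n" for i
      using that
    proof (induction i)
      case 0 then show ?case using a5 by (simp add: a_def f_def)
    next
      case (Suc i)
      then have IH: "xs ! i = (a + f i) mod 5" and i: "i < n" by simp_all
      show ?case
      proof (cases "i = p")
        case True
        have "xs ! Suc i = ((a + f i) mod 5 + 2) mod 5" using p True IH by simp
        also have "\<dots> = (a + f (Suc i)) mod 5" by (rule step_mod[symmetric]) (simp add: f_def True)
        finally show ?thesis .
      next
        case False
        then have "xs ! Suc i \<noteq> (xs ! i + 2) mod 5" using uniq[OF i p(1)] p(2) by blast
        then have "xs ! Suc i = (xs ! i + 1) mod 5" using st[OF i] by blast
        also have "\<dots> = ((a + f i) mod 5 + 1) mod 5" using IH by simp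
        also have "\<dots> = (a + f (Suc i)) mod 5" by (rule step_mod[symmetric]) (use False in \<open>simp add: f_def\<close>)
        finally show ?thesis .
      qed
    qed
    have "xs = Ql n a (Suc p)"
      by (rule nth_equalityI) (use l val in \<open>auto simp: nth_Ql f_def\<close>)
    moreover have "Suc p \<in> {1..n}" using p(1) by simp
    ultimately show ?thesis using a5 by blast
  next
    case False
    have val: "xs ! i = (a + i) mod 5" if "i \<le> n" for i
      using that
    proof (induction i)
      case 0 then show ?case using a5 by (simp add: a_def)
    next
      case (Suc i)
      then have IH: "xs ! i = (a + i) mod 5" and i: "i < n" by simp_all
      have "xs ! Suc i = (xs ! i + 1) mod 5" using st[OF i] False i by blast
      also have "\<dots> = ((a + i) mod 5 + 1) mod 5" using IH by simp
      also have "\<dots> = (a + Suc i) mod 5" by (rule step_mod[symmetric]) simp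
      finally show ?case .
    qed
    have "xs = Pl n a"
      by (rule nth_equalityI) (use l val in \<open>auto simp: nth_Pl\<close>)
    then show ?thesis using a5 by auto
  qed
qed

lemma Q_neg:
  fixes u :: "nat list \<Rightarrow> 'k::field"
  assumes u: "u \<in> Omega V5 E5 n" and j: "1 \<le> j" "Suc j \<le> n"
  shows "u (Ql n a (Suc j)) + u (Ql n a j) = 0"
proof -
  let ?xs = "Ql n a (Suc j)"
  have e1: "?xs ! j = (?xs ! (j - 1) + 1) mod 5"
  proof -
    have "?xs ! j = (a + j) mod 5" "?xs ! (j - 1) = (a + (j - 1)) mod 5" using j by (simp_all add: nth_Ql)
    moreover have "(a + j) mod 5 = ((a + (j - 1)) mod 5 + 1) mod 5" by (rule step_mod) (use j in simp)
    ultimately show ?thesis by simp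
  qed
  have e2: "?xs ! Suc j = (?xs ! (j - 1) + 3) mod 5"
  proof -
    have "?xs ! Suc j = (a + Suc (Suc j)) mod 5" "?xs ! (j - 1) = (a + (j - 1)) mod 5" using j by (simp_all add: nth_Ql)
    moreover have "(a + Suc (Suc j)) mod 5 = ((a + (j - 1)) mod 5 + 3) mod 5" by (rule step_mod) (use j in simp)
    ultimately show ?thesis by simp
  qed
  have e3: "(?xs ! (j - 1) + 2) mod 5 = (a + Suc j) mod 5"
  proof -
    have "?xs ! (j - 1) = (a + (j - 1)) mod 5" using j by (simp_all add: nth_Ql)
    moreover have "(a + Suc j) mod 5 = ((a + (j - 1)) mod 5 + 2) mod 5" by (rule step_mod) (use j in simp)
    ultimately show ?thesis by simp
  qed
  have "u ?xs + u (?xs[j := (?xs ! (j - 1) + 2) mod 5]) = 0"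
    by (rule F2[OF u EP_Ql allowed_Ql _ _ e1 e2]) (use j in simp_all)
  then show ?thesis unfolding e3 swap_Q1[OF j(2)] .
qed

lemma Q_val:
  fixes u :: "nat list \<Rightarrow> 'k::field"
  assumes u: "u \<in> Omega V5 E5 n"
  shows "1 \<le> j \<Longrightarrow> j \<le> n \<Longrightarrow> u (Ql n a j) = (-1) ^ (n - j) * u (Ql n a n)"
proof (induction "n - j" arbitrary: j)
  case 0 then show ?case by simp
next
  case (Suc d)
  then have "Suc j \<le> n" by simp
  have IH: "u (Ql n a (Suc j)) = (-1) ^ (n - Suc j) * u (Ql n a n)"
    by (rule Suc.hyps(1)) (use Suc in simp_all)
  have "u (Ql n a j) = - u (Ql n a (Suc j))" using Q_neg[OF u Suc.prems(1) \<open>Suc j \<le> n\<close>] by (simp add: eq_neg_iff_add_eq_0 add.commute)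
  also have "\<dots> = (-1) ^ (n - j) * u (Ql n a n)"
    using IH \<open>Suc j \<le> n\<close> by (simp add: Suc_diff_Suc[symmetric])
  finally show ?case .
qed


lemma ins_update: "k \<le> length w \<Longrightarrow> (ins k v w)[k := v'] = ins k v' w"
  by (rule nth_equalityI) (auto simp: length_ins nth_ins nth_list_update)

lemma bad_cases: "(b::nat) < 5 \<Longrightarrow> c < 5 \<Longrightarrow> c \<noteq> b \<Longrightarrow> c \<noteq> (b + 1) mod 5 \<Longrightarrow> c \<noteq> (b + 2) mod 5
  \<Longrightarrow> c = (b + 3) mod 5 \<or> c = (b + 4) mod 5"
  using five_cases[of b] five_cases[of c] by auto

lemma alpha_A: "a < 5 \<Longrightarrow> alpha_path a n \<in> A_space V5 E5 n"
  unfolding A_space_def R_space_def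
  using EP_Pl reg_Pl allowed_Pl by (auto simp: alpha_val split: if_splits)

lemma beta_A: "beta_path a n \<in> A_space V5 E5 n"
proof -
  have H: "\<exists>j. xs = Ql n a j" if "beta_path a n xs \<noteq> 0" for xs using beta_val0 that by blast
  have 1: "\<forall>xs. beta_path a n xs \<noteq> 0 \<longrightarrow> xs \<in> elem_paths V5 n \<and> regular_path xs"
    using H EP_Ql reg_Ql by metis
  have 2: "\<forall>xs. beta_path a n xs \<noteq> 0 \<longrightarrow> allowed_path E5 xs"
    using H allowed_Ql by metis
  show ?thesis unfolding A_space_def R_space_def using 1 2 by blast
qed

lemma finite_V5: "finite V5" by (simp add: circ_V_def)

lemma alpha_Omega:
  assumes a: "a < 5" and n: "1 \<le> n"
  shows "alpha_path a n \<in> Omega V5 E5 n"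
proof (cases "n = 1")
  case True then show ?thesis using alpha_A[OF a] by (simp add: Omega_def)
next
  case False
  then have n2: "2 \<le> n" using n by simp
  show ?thesis
  proof (rule Omega_intro[OF finite_V5 n2 alpha_A[OF a]])
    fix w i assume w: "length w = n" "set w \<subseteq> V5" "regular_path w" and i: "Suc i < n"
      and bad: "(w ! i, w ! Suc i) \<notin> E5"
    have z: "alpha_path a n (ins (Suc i) v w) = 0" for v
    proof -
      have "ins (Suc i) v w \<noteq> Pl n a"
      proof
        assume e: "ins (Suc i) v w = Pl n a"
        have "w ! i = ins (Suc i) v w ! i" using w i by (simp add: nth_ins)
        also have "\<dots> = (a + i) mod 5" using e i by (simp add: nth_Pl)
        finally have 1: "w ! i = (a + i) mod 5" .
        have "w ! Suc i = ins (Suc i) v w ! Suc (Suc i)" using w i by (simp add: nth_ins)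
        also have "\<dots> = (a + Suc (Suc i)) mod 5" using e i by (simp add: nth_Pl)
        also have "\<dots> = ((a + i) mod 5 + 2) mod 5" by (rule step_mod) simp
        finally have 2: "w ! Suc i = (w ! i + 2) mod 5" using 1 by simp
        have "(w ! i, w ! Suc i) \<in> E5" unfolding E5_iff using 1 2 by simp
        with bad show False by simp
      qed
      then show ?thesis using a by (simp add: alpha_val)
    qed
    show "(\<Sum>v\<in>V5. alpha_path a n (ins (Suc i) v w)) = 0" by (intro sum.neutral ballI z)
  qed
qed

lemma beta_Omega:
  assumes a: "a < 5" and n: "1 \<le> n"
  shows "beta_path a n \<in> Omega V5 E5 n"
proof (cases "n = 1")
  case True then show ?thesis using beta_A by (simp add: Omega_def)
next
  case False
  then have n2: "2 \<le> n" using n by simp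
  show ?thesis
  proof (rule Omega_intro[OF finite_V5 n2 beta_A])
    fix w i assume w: "length w = n" "set w \<subseteq> V5" "regular_path w" and i: "Suc i < n"
      and bad: "(w ! i, w ! Suc i) \<notin> E5"
    define b where "b = w ! i"
    define c where "c = w ! Suc i"
    define k where "k = Suc i"
    define X where "X = (\<lambda>v. ins k v w)"
    have "w ! i \<in> set w" "w ! Suc i \<in> set w" using w i by simp_all
    then have b5: "b < 5" and c5: "c < 5" using w(2) by (auto simp: b_def c_def circ_V_def)
    have bc: "c \<noteq> b" using w(3) i w(1) unfolding regular_path_def b_def c_def by auto
    have nE: "\<not> (c = (b + 1) mod 5 \<or> c = (b + 2) mod 5)" using bad b5 unfolding E5_iff b_def c_def by auto
    have kl: "k \<le> length w" using w i by (simp add: k_def)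
    have Xi: "X v ! i = b" for v using kl by (simp add: X_def nth_ins k_def b_def)
    have Xk: "X v ! k = v" for v using kl by (simp add: X_def nth_ins)
    have XSk: "X v ! Suc k = c" for v using kl by (simp add: X_def nth_ins k_def c_def)
    have Xi': "X v ! Suc i = v" for v using Xk by (simp add: k_def)
    have isQ: "(b, v) \<in> E5 \<and> (v, c) \<in> E5" if "X v = Ql n a j" for v j
    proof -
      have al: "\<forall>j. Suc j < length (X v) \<longrightarrow> (X v ! j, X v ! Suc j) \<in> E5"
        using allowed_Ql[of n a j] unfolding that[symmetric] allowed_path_def .
      have lX: "length (X v) = Suc n" using kl w by (simp add: X_def length_ins)
      have "(X v ! i, X v ! Suc i) \<in> E5" using al[rule_format, of i] lX i by simp
      moreover have "(X v ! k, X v ! Suc k) \<in> E5" using al[rule_format, of k] lX i by (simp add: k_def)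
      ultimately show ?thesis using Xi Xk XSk Xi' by simp
    qed
    have nzQ: "\<exists>j\<in>{1..n}. X v = Ql n a j" if "beta_path a n (X v) \<noteq> 0" for v
      using beta_val0 that by blast
    have good: "(b, v) \<in> E5 \<and> (v, c) \<in> E5" if "beta_path a n (X v) \<noteq> 0" for v
      using nzQ[OF that] isQ by blast
    from bad_cases[OF b5 c5 bc] nE consider "c = (b + 4) mod 5" | "c = (b + 3) mod 5" by blast
    then show "(\<Sum>v\<in>V5. beta_path a n (ins (Suc i) v w)) = 0"
    proof cases
      case 1
      have "beta_path a n (X v) = 0" for v
      proof (rule ccontr)
        assume nz: "beta_path a n (X v) \<noteq> 0"
        obtain j where j: "j \<in> {1..n}" "X v = Ql n a j" using nzQ[OF nz] by blast
        have g: "(b, v) \<in> E5" "(v, c) \<in> E5" using good[OF nz] by auto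
        have v: "v = (b + 2) mod 5"
          using ar4[OF b5, of v] g 1 unfolding E5_iff by auto
        have "Ql n a j ! Suc i = (Ql n a j ! i + 2) mod 5" using Xi Xi' v j(2) by metis
        then have j1: "Suc i = j" by (rule Q_two[rotated]) (use i in simp)
        have "(v + 2) mod 5 = c" using ar_c4[OF v refl] 1 by simp
        then have "Ql n a j ! Suc (Suc i) = (Ql n a j ! Suc i + 2) mod 5"
          using Xi' XSk j(2) by (metis k_def)
        then have "Suc (Suc i) = j" by (rule Q_two[rotated]) (use i in simp)
        with j1 show False by simp
      qed
      then have "beta_path a n (ins (Suc i) v w) = 0" for v by (simp add: X_def k_def)
      then show ?thesis by (intro sum.neutral ballI)
    next
      case 2
      define v1 where "v1 = (b + 1) mod 5"
      define v2 where "v2 = (b + 2) mod 5"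
      have ne: "v2 \<noteq> v1" unfolding v1_def v2_def by (rule ar_ne21)
      have z: "beta_path a n (X v) = 0" if "v \<in> {0..<5} - {v1, v2}" for v
      proof (rule ccontr)
        assume nz: "beta_path a n (X v) \<noteq> 0"
        have "(b, v) \<in> E5" using good[OF nz] by blast
        then show False using that unfolding E5_iff v1_def v2_def by auto
      qed
      have "(\<Sum>v\<in>V5. beta_path a n (X v)) = (\<Sum>v\<in>{v1, v2}. beta_path a n (X v))"
      proof (unfold V5_eq, rule sum.mono_neutral_right)
        show "finite {0..<5::nat}" by simp
        have "v1 < 5" "v2 < 5" unfolding v1_def v2_def by simp_all
        then show "{v1, v2} \<subseteq> {0..<5}" by auto
        show "\<forall>v\<in>{0..<5} - {v1, v2}. beta_path a n (X v) = 0" using z by blast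
      qed
      also have "\<dots> = beta_path a n (X v1) + beta_path a n (X v2)" using ne by simp
      also have "\<dots> = 0"
      proof (cases "\<exists>j\<in>{1..n}. X v1 = Ql n a j")
        case True
        then obtain j where j: "j \<in> {1..n}" "X v1 = Ql n a j" by blast
        have "c = (v1 + 2) mod 5" using 2 mod_12_3[of b] by (simp add: v1_def)
        then have "Ql n a j ! Suc (Suc i) = (Ql n a j ! Suc i + 2) mod 5"
          using Xi' XSk j(2) by (metis k_def)
        then have jj: "Suc (Suc i) = j" by (rule Q_two[rotated]) (use i in simp)
        have bi: "b = (a + i) mod 5" using Xi[of v1] j(2) jj i by (simp add: nth_Ql)
        have v2a: "v2 = (a + Suc (Suc i)) mod 5" unfolding v2_def bi by (rule step_mod[symmetric]) simp
        have "X v2 = (X v1)[k := v2]" using kl by (simp add: X_def ins_update)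
        also have "\<dots> = Ql n a (Suc i)" unfolding j(2) jj[symmetric] v2a k_def
          by (rule swap_Q1) (use j jj in simp)
        finally have X2: "X v2 = Ql n a (Suc i)" .
        have "beta_path a n (X v1) = (-1) ^ (n - Suc (Suc i))" using j jj beta_val by metis
        moreover have "beta_path a n (X v2) = (-1) ^ (n - Suc i)" unfolding X2 by (rule beta_val) (use i in simp)
        moreover have "n - Suc i = Suc (n - Suc (Suc i))" using j jj by simp
        ultimately show ?thesis by (metis add.right_inverse power_Suc mult_minus1)
      next
        case False
        have "\<not> (\<exists>j\<in>{1..n}. X v2 = Ql n a j)"
        proof
          assume "\<exists>j\<in>{1..n}. X v2 = Ql n a j"
          then obtain j where j: "j \<in> {1..n}" "X v2 = Ql n a j" by blast
          have "Ql n a j ! Suc i = (Ql n a j ! i + 2) mod 5" using Xi Xi' j(2) by (metis v2_def)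
          then have jj: "Suc i = j" by (rule Q_two[rotated]) (use i in simp)
          have bi: "b = (a + i) mod 5" using Xi[of v2] j(2) jj i by (simp add: nth_Ql)
          have v1a: "v1 = (a + Suc i) mod 5" unfolding v1_def bi by (rule step_mod[symmetric]) simp
          have "X v1 = (X v2)[k := v1]" using kl by (simp add: X_def ins_update)
          also have "\<dots> = Ql n a (Suc (Suc i))" unfolding j(2) jj[symmetric] v1a k_def
            by (rule swap_Q2) (use i in simp)
          finally show False using False i by auto
        qed
        then show ?thesis using False beta_val0 by (metis add.right_neutral)
      qed
      finally show ?thesis by (simp add: X_def k_def)
    qed
  qed
qed

lemma Q_heads: "a < 5 \<Longrightarrow> a' < 5 \<Longrightarrow> 1 \<le> j \<Longrightarrow> 1 \<le> j' \<Longrightarrow> Ql n a j = Ql n a' j' \<Longrightarrow> a = a'"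
  using head_Ql by metis

lemma P_heads: "a < 5 \<Longrightarrow> a' < 5 \<Longrightarrow> Pl n a = Pl n a' \<Longrightarrow> a = a'"
  using head_Pl by metis

lemma alpha_at_P: "a < 5 \<Longrightarrow> a' < 5 \<Longrightarrow> alpha_path a n (Pl n a') = (if a = a' then 1 else 0)"
  using P_heads by (auto simp: alpha_val)

lemma beta_at_P: "a < 5 \<Longrightarrow> a' < 5 \<Longrightarrow> beta_path a n (Pl n a') = 0"
  by (rule beta_val0) (use P_ne_Q in auto)

lemma alpha_at_Q: "a < 5 \<Longrightarrow> a' < 5 \<Longrightarrow> j \<in> {1..n} \<Longrightarrow> alpha_path a n (Ql n a' j) = 0"
  using P_ne_Q[of a' a j n] by (auto simp: alpha_val)

lemma beta_at_Q: "a < 5 \<Longrightarrow> a' < 5 \<Longrightarrow> j \<in> {1..n} \<Longrightarrow>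
    beta_path a n (Ql n a' j) = (if a = a' then (-1) ^ (n - j) else 0)"
proof (cases "a = a'")
  case True then show "j \<in> {1..n} \<Longrightarrow> ?thesis" by (simp add: beta_val)
next
  case False
  assume "a < 5" "a' < 5" "j \<in> {1..n}"
  then have "beta_path a n (Ql n a' j) = 0"
    by (intro beta_val0) (use False Q_heads in force)
  then show ?thesis using False by simp
qed

lemma sum_single_nz:
  assumes "finite B" "v0 \<in> B" "\<And>v. v \<in> B \<Longrightarrow> v \<noteq> v0 \<Longrightarrow> g v = (0::'k::comm_monoid_add)"
  shows "sum g B = g v0"
proof -
  have "sum g B = g v0 + sum g (B - {v0})" using assms by (simp add: sum.remove)
  also have "sum g (B - {v0}) = 0" using assms by (intro sum.neutral) auto
  finally show ?thesis by simp
qed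

theorem mainTheorem1:
  fixes n :: nat
  assumes "n \<ge> 1"
  defines "B \<equiv> {alpha_path a n | a. a < 5} \<union> {beta_path a n | a. a < 5}
                 :: (nat list \<Rightarrow> 'k::field_char_0) set"
  shows "vector_space.dim fscale (Omega (circ_V 5) (circ_E 5 {1, 2}) n :: (nat list \<Rightarrow> 'k) set) = 10
    \<and> card B = 10
    \<and> B \<subseteq> Omega (circ_V 5) (circ_E 5 {1, 2}) n
    \<and> \<not> module.dependent fscale B
    \<and> module.span fscale B = Omega (circ_V 5) (circ_E 5 {1, 2}) n"
  proof -
  interpret vs: vector_space "fscale :: 'k \<Rightarrow> (nat list \<Rightarrow> 'k) \<Rightarrow> _" by (rule vs_fscale)
  define Om where "Om = (Omega (circ_V 5) (circ_E 5 {1, 2}) n :: (nat list \<Rightarrow> 'k) set)"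
  define Al where "Al = (\<lambda>a. alpha_path a n :: nat list \<Rightarrow> 'k)"
  define Be where "Be = (\<lambda>a. beta_path a n :: nat list \<Rightarrow> 'k)"
  have n1: "n \<in> {1..n}" using assms(1) by simp
  have Beq: "B = Al ` {..<5} \<union> Be ` {..<5}" by (auto simp: B_def Al_def Be_def)
  have finB: "finite B" by (simp add: Beq)
  have injA: "inj_on Al {..<5}"
  proof
    fix a a' assume a: "a \<in> {..<5}" "a' \<in> {..<5}" and e: "Al a = Al a'"
    have "Al a (Pl n a) = Al a' (Pl n a)" using e by simp
    then show "a = a'" using a by (simp add: Al_def alpha_at_P split: if_splits)
  qed
  have injB: "inj_on Be {..<5}"
  proof
    fix a a' assume a: "a \<in> {..<5}" "a' \<in> {..<5}" and e: "Be a = Be a'"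
    have "Be a (Ql n a n) = Be a' (Ql n a n)" using e by simp
    then show "a = a'" using a n1 by (simp add: Be_def beta_at_Q split: if_splits)
  qed
  have disj: "Al ` {..<5} \<inter> Be ` {..<5} = {}"
  proof (rule ccontr)
    assume "Al ` {..<5} \<inter> Be ` {..<5} \<noteq> {}"
    then obtain a a' where a: "a < 5" "a' < 5" and e: "Al a = Be a'" by auto
    have "Al a (Pl n a) = Be a' (Pl n a)" using e by simp
    then show False using a by (simp add: Al_def Be_def alpha_at_P beta_at_P)
  qed
  have card: "card B = 10"
    unfolding Beq using injA injB disj by (simp add: card_Un_disjoint card_image)
  have sub: "B \<subseteq> Om"
    unfolding Beq Om_def Al_def Be_def using alpha_Omega beta_Omega assms(1) by auto
  have sep: "\<exists>xs. v0 xs = 1 \<and> (\<forall>v\<in>B. v \<noteq> v0 \<longrightarrow> v xs = 0)" if "v0 \<in> B" for v0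
  proof -
    from that consider a where "a < 5" "v0 = Al a" | a where "a < 5" "v0 = Be a" unfolding Beq by auto
    then show ?thesis
    proof cases
      case 1
      show ?thesis
      proof (rule exI[of _ "Pl n a"], intro conjI ballI impI)
        show "v0 (Pl n a) = 1" using 1 by (simp add: Al_def alpha_at_P)
        fix v assume "v \<in> B" "v \<noteq> v0"
        then show "v (Pl n a) = 0" using 1 unfolding Beq
          by (auto simp: Al_def Be_def alpha_at_P beta_at_P)
      qed
    next
      case 2
      show ?thesis
      proof (rule exI[of _ "Ql n a n"], intro conjI ballI impI)
        show "v0 (Ql n a n) = 1" using 2 n1 by (simp add: Be_def beta_at_Q)
        fix v assume "v \<in> B" "v \<noteq> v0"
        then show "v (Ql n a n) = 0" using 2 n1 unfolding Beq
          by (auto simp: Al_def Be_def alpha_at_Q beta_at_Q)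
      qed
    qed
  qed
  have indep: "\<not> vs.dependent B"
  proof
    assume "vs.dependent B"
    then obtain c where c: "\<exists>v\<in>B. c v \<noteq> 0" "(\<Sum>v\<in>B. fscale (c v) v) = 0"
      using vs.dependent_finite[OF finB] by blast
    from c(1) obtain v0 where v0: "v0 \<in> B" "c v0 \<noteq> 0" by blast
    obtain xs where xs: "v0 xs = 1" "\<forall>v\<in>B. v \<noteq> v0 \<longrightarrow> v xs = 0" using sep[OF v0(1)] by blast
    have "0 = (\<Sum>v\<in>B. fscale (c v) v) xs" using c(2) by simp
    also have "\<dots> = (\<Sum>v\<in>B. c v * v xs)" by (simp add: sum_fun_apply fscale_def)
    also have "\<dots> = c v0 * v0 xs" by (rule sum_single_nz[OF finB v0(1)]) (use xs in simp)
    finally show False using v0 xs by simp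
  qed
  have OmS: "vs.subspace Om" unfolding Om_def by (rule Omega_subspace)
  have span1: "vs.span B \<subseteq> Om" by (rule vs.span_minimal[OF sub OmS])
  have span2: "Om \<subseteq> vs.span B"
  proof
    fix u assume u: "u \<in> Om"
    have uO: "u \<in> Omega V5 E5 n" using u by (simp add: Om_def)
    define R where "R = (\<Sum>a<5. fscale (u (Pl n a)) (Al a)) + (\<Sum>a<5. fscale (u (Ql n a n)) (Be a))"
    have Rin: "R \<in> vs.span B"
      unfolding R_def
      by (intro vs.span_add vs.span_sum vs.span_scale vs.span_base) (auto simp: Beq)
    have Rval: "R xs = (\<Sum>a<5. u (Pl n a) * Al a xs) + (\<Sum>a<5. u (Ql n a n) * Be a xs)" for xs
      by (simp add: R_def sum_fun_apply fscale_def)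
    have "u = R"
    proof
      fix xs
      show "u xs = R xs"
      proof (cases "\<exists>a<5. xs = Pl n a")
        case True
        then obtain a0 where a0: "a0 < 5" "xs = Pl n a0" by blast
        have "(\<Sum>a<5. u (Pl n a) * Al a xs) = u (Pl n a0)"
          by (subst sum_single_nz[of _ a0]) (use a0 in \<open>auto simp: Al_def alpha_at_P\<close>)
        moreover have "(\<Sum>a<5. u (Ql n a n) * Be a xs) = 0"
          by (rule sum.neutral) (use a0 in \<open>auto simp: Be_def beta_at_P\<close>)
        ultimately show ?thesis using a0 Rval by simp
      next
        case False
        show ?thesis
        proof (cases "\<exists>a<5. \<exists>j\<in>{1..n}. xs = Ql n a j")
          case True
          then obtain a0 j0 where a0: "a0 < 5" "j0 \<in> {1..n}" "xs = Ql n a0 j0" by blast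
          have "(\<Sum>a<5. u (Pl n a) * Al a xs) = 0"
            by (rule sum.neutral) (use a0 in \<open>auto simp: Al_def alpha_at_Q\<close>)
          moreover have "(\<Sum>a<5. u (Ql n a n) * Be a xs) = u (Ql n a0 n) * (-1) ^ (n - j0)"
            by (subst sum_single_nz[of _ a0]) (use a0 in \<open>auto simp: Be_def beta_at_Q\<close>)
          moreover have "u xs = (-1) ^ (n - j0) * u (Ql n a0 n)"
            using Q_val[OF uO, of j0 a0] a0 by simp
          ultimately show ?thesis using Rval by (simp add: mult.commute)
        next
          case False2: False
          have "u xs = 0"
          proof (rule ccontr)
            assume nz: "u xs \<noteq> 0"
            have "xs \<in> elem_paths V5 n" using uO nz
              by (auto simp: Omega_def A_space_def R_space_def split: if_splits)
            from classify[OF uO this nz] False False2 show False by blast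
          qed
          moreover have "(\<Sum>a<5. u (Pl n a) * Al a xs) = 0"
            by (rule sum.neutral) (use False in \<open>auto simp: Al_def alpha_val\<close>)
          moreover have "(\<Sum>a<5. u (Ql n a n) * Be a xs) = 0"
          proof (rule sum.neutral, intro ballI)
            fix a assume a: "a \<in> {..<5::nat}"
            have "Be a xs = 0" unfolding Be_def by (rule beta_val0) (use False2 a in auto)
            then show "u (Ql n a n) * Be a xs = 0" by simp
          qed
          ultimately show ?thesis using Rval by simp
        qed
      qed
    qed
    then show "u \<in> vs.span B" using Rin by simp
  qed
  have spanEq: "vs.span B = Om" using span1 span2 by blast
  have dim: "vs.dim Om = 10"
    using vs.dim_span_eq_card_independent[OF indep] spanEq card by simp
  show ?thesis using dim card sub indep spanEq unfolding Om_def by simp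
qed

end
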